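(* On the square graph with vertices $0,1,2,3$ (in cyclic order) over $\mathbb{F}_2$ with exterior algebra $\Omega(\mathbb{Z}_4)$, the unique quantum metric $g=e^+\otimes e^-+e^-\otimes e^+$ has exactly four QLCs, namely for $\alpha,\beta\in\{0,1\}$: $\nabla e^+=\alpha\, e^-\otimes e^-+\alpha\beta(g+e^+\otimes e^+)$, $\nabla e^-=\beta\, e^+\otimes e^++\alpha\beta(g+e^-\otimes e^-)$, with $\sigma(e^+\otimes e^+)=(1+\alpha\beta)e^+\otimes e^++\alpha\, e^-\otimes e^-$, $\sigma(e^+\otimes e^-)=(1+\alpha\beta)e^-\otimes e^++\alpha\beta\, e^+\otimes e^-$, $\sigma(e^-\otimes e^-)=(1+\alpha\beta)e^-\otimes e^-+\beta\, e^+\otimes e^+$, $\sigma(e^-\otimes e^+)=(1+\alpha\beta)e^+\otimes e^-+\alpha\beta\, e^-\otimes e^+$. All four are flat.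
   Context: $A=\mathbb{F}_2(\mathbb{Z}_4)$; $(R_\pm f)(i)=f(i\pm1)$ mod 4. The square graph has arrows $i\to i\pm1$ mod 4, and the calculus has basis over $A$ given by $e^+=01+12+23+30$, $e^-=10+21+32+03$ (here $ij$ denotes the arrow $i\to j$), with $e^\pm f=(R_\pm f)e^\pm$ and ${\rm d} f=(R_+f+f)e^++(R_-f+f)e^-$; $\Omega^1\otimes_A\Omega^1$ is free with basis $e^a\otimes e^b$. $\Omega(\mathbb{Z}_4)$ is the exterior algebra generated by $A$ and $e^\pm$ with relations $(e^+)^2=(e^-)^2=0$, $e^+\wedge e^-+e^-\wedge e^+=0$, ${\rm d} e^\pm=0$. A bimodule connection is a linear $\nabla:\Omega^1\to\Omega^1\otimes_A\Omega^1$ with $\nabla(f\omega)={\rm d} f\otimes\omega+f\nabla\omega$ and $\nabla(\omega f)=(\nabla\omega)f+\sigma(\omega\otimes{\rm d} f)$ for a bimodule map $\sigma$; it is a QLC if $T_\nabla=\wedge\nabla-{\rm d}=0$ and $(\nabla\otimes\mathrm{id}+(\sigma\otimes\mathrm{id})(\mathrm{id}\otimes\nabla))g=0$. Flat means curvature $R_\nabla=({\rm d}\otimes\mathrm{id}-(\wedge\otimes\mathrm{id})(\mathrm{id}\otimes\nabla))\nabla$ vanishes. *)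

theory Defs
  imports Main "HOL-Library.Z2" "HOL-Library.Numeral_Type" "HOL-Library.Function_Algebras"
begin

text \<open>Omega^1 is free as a left A-module on e+, e-; an element sum_a f_a e^a is stored
  as its left coefficient function (pm => A). Likewise Omega^1 (x)_A Omega^1 has
  left basis e^a (x) e^b, Omega^1 (x) Omega^1 (x) Omega^1 has left basis
  e^a (x) e^b (x) e^c, Omega^2 has left basis e+ /\ e- (so Omega^2 = A), and
  Omega^2 (x)_A Omega^1 has left basis (e+ /\ e-) (x) e^c.\<close>

datatype pm = Pl | Mi

type_synonym alg = "4 \<Rightarrow> bit"
type_synonym om1 = "pm \<Rightarrow> alg"
type_synonym om11 = "pm \<Rightarrow> pm \<Rightarrow> alg"
type_synonym om111 = "pm \<Rightarrow> pm \<Rightarrow> pm \<Rightarrow> alg"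
type_synonym om2 = "alg"
type_synonym om21 = "pm \<Rightarrow> alg"

fun sh :: "pm \<Rightarrow> 4" where
  "sh Pl = 1" | "sh Mi = -1"

definition R :: "pm \<Rightarrow> alg \<Rightarrow> alg" where
  "R a f = (\<lambda>i. f (i + sh a))"

definition e :: "pm \<Rightarrow> om1" where
  "e a = (\<lambda>b i. if a = b then 1 else 0)"

definition dA :: "alg \<Rightarrow> om1" where
  "dA f = (\<lambda>b i. R b f i + f i)"

text \<open>bimodule structures, using e^a f = (R_a f) e^a\<close>
definition lmul1 :: "alg \<Rightarrow> om1 \<Rightarrow> om1" where
  "lmul1 f w = (\<lambda>a i. f i * w a i)"
definition rmul1 :: "om1 \<Rightarrow> alg \<Rightarrow> om1" where
  "rmul1 w f = (\<lambda>a i. w a i * f (i + sh a))"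
definition lmul2 :: "alg \<Rightarrow> om11 \<Rightarrow> om11" where
  "lmul2 f x = (\<lambda>a b i. f i * x a b i)"
definition rmul2 :: "om11 \<Rightarrow> alg \<Rightarrow> om11" where
  "rmul2 x f = (\<lambda>a b i. x a b i * f (i + sh a + sh b))"

definition tens11 :: "om1 \<Rightarrow> om1 \<Rightarrow> om11" where
  "tens11 w v = (\<lambda>a b i. w a i * v b (i + sh a))"
definition tens21 :: "om11 \<Rightarrow> om1 \<Rightarrow> om111" where
  "tens21 x v = (\<lambda>a b c i. x a b i * v c (i + sh a + sh b))"
definition tens12 :: "om1 \<Rightarrow> om11 \<Rightarrow> om111" where
  "tens12 w y = (\<lambda>a b c i. w a i * y b c (i + sh a))"
definition tens2_1 :: "om2 \<Rightarrow> om1 \<Rightarrow> om21" where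
  "tens2_1 t v = (\<lambda>c i. t i * v c (i + sh Pl + sh Mi))"

text \<open>wedge product Omega^1 (x) Omega^1 -> Omega^2 in the exterior algebra:
  (e^a)^2 = 0 and e^- /\ e^+ = - e^+ /\ e^- = e^+ /\ e^- (characteristic 2)\<close>
definition wedge11 :: "om11 \<Rightarrow> om2" where
  "wedge11 x = (\<lambda>i. x Pl Mi i + x Mi Pl i)"
definition wedge_id :: "om111 \<Rightarrow> om21" where
  "wedge_id z = (\<lambda>c i. z Pl Mi c i + z Mi Pl c i)"

text \<open>exterior derivative on 1-forms: d(sum_a f_a e^a) = sum_a d f_a /\ e^a (since d e^a = 0)\<close>
definition d1 :: "om1 \<Rightarrow> om2" where
  "d1 w = wedge11 (tens11 (dA (w Pl)) (e Pl)) + wedge11 (tens11 (dA (w Mi)) (e Mi))"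

definition sig_id :: "(om11 \<Rightarrow> om11) \<Rightarrow> om111 \<Rightarrow> om111" where
  "sig_id S z = (\<lambda>a b c. S (\<lambda>a' b'. z a' b' c) a b)"

definition bimod_map :: "(om11 \<Rightarrow> om11) \<Rightarrow> bool" where
  "bimod_map S \<longleftrightarrow> (\<forall>x y. S (x + y) = S x + S y)
     \<and> (\<forall>f x. S (lmul2 f x) = lmul2 f (S x))
     \<and> (\<forall>f x. S (rmul2 x f) = rmul2 (S x) f)"

definition bimod_conn :: "(om1 \<Rightarrow> om11) \<Rightarrow> (om11 \<Rightarrow> om11) \<Rightarrow> bool" where
  "bimod_conn N S \<longleftrightarrow> (\<forall>w v. N (w + v) = N w + N v)
     \<and> (\<forall>f w. N (lmul1 f w) = tens11 (dA f) w + lmul2 f (N w))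
     \<and> (\<forall>w f. N (rmul1 w f) = rmul2 (N w) f + S (tens11 w (dA f)))
     \<and> bimod_map S"

definition torsion_free :: "(om1 \<Rightarrow> om11) \<Rightarrow> bool" where
  "torsion_free N \<longleftrightarrow> (\<forall>w. wedge11 (N w) - d1 w = 0)"

text \<open>(N (x) id + (S (x) id)(id (x) N)) g, using g = sum_b (sum_a g_ab e^a) (x) e^b\<close>
definition metric_term :: "(om1 \<Rightarrow> om11) \<Rightarrow> (om11 \<Rightarrow> om11) \<Rightarrow> om11 \<Rightarrow> om111" where
  "metric_term N S g =
     (tens21 (N (\<lambda>a. g a Pl)) (e Pl) + sig_id S (tens12 (\<lambda>a. g a Pl) (N (e Pl))))
   + (tens21 (N (\<lambda>a. g a Mi)) (e Mi) + sig_id S (tens12 (\<lambda>a. g a Mi) (N (e Mi))))"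

definition is_QLC :: "om11 \<Rightarrow> (om1 \<Rightarrow> om11) \<Rightarrow> (om11 \<Rightarrow> om11) \<Rightarrow> bool" where
  "is_QLC g N S \<longleftrightarrow> bimod_conn N S \<and> torsion_free N \<and> metric_term N S g = 0"

text \<open>(d (x) id - (wedge (x) id)(id (x) N)) applied to x = sum_b (sum_a x_ab e^a) (x) e^b\<close>
definition curv_op :: "(om1 \<Rightarrow> om11) \<Rightarrow> om11 \<Rightarrow> om21" where
  "curv_op N x =
     (tens2_1 (d1 (\<lambda>a. x a Pl)) (e Pl) - wedge_id (tens12 (\<lambda>a. x a Pl) (N (e Pl))))
   + (tens2_1 (d1 (\<lambda>a. x a Mi)) (e Mi) - wedge_id (tens12 (\<lambda>a. x a Mi) (N (e Mi))))"

definition curvature :: "(om1 \<Rightarrow> om11) \<Rightarrow> om1 \<Rightarrow> om21" where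
  "curvature N w = curv_op N (N w)"

definition flat :: "(om1 \<Rightarrow> om11) \<Rightarrow> bool" where
  "flat N \<longleftrightarrow> (\<forall>w. curvature N w = 0)"

text \<open>quantum metric: central, quantum symmetric (wedge g = 0), nondegenerate
  (there is a bimodule map ( , ) : Omega^1 (x) Omega^1 -> A with
   ((w, g1)) g2 = w = g1 (g2, w))\<close>
definition bimod_map_A :: "(om11 \<Rightarrow> alg) \<Rightarrow> bool" where
  "bimod_map_A P \<longleftrightarrow> (\<forall>x y. P (x + y) = P x + P y)
     \<and> (\<forall>f x. P (lmul2 f x) = f * P x)
     \<and> (\<forall>f x. P (rmul2 x f) = P x * f)"

definition pair_id :: "(om11 \<Rightarrow> alg) \<Rightarrow> om111 \<Rightarrow> om1" where
  "pair_id P z = (\<lambda>c. P (\<lambda>a b. z a b c))"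

definition id_pair :: "(om11 \<Rightarrow> alg) \<Rightarrow> om111 \<Rightarrow> om1" where
  "id_pair P z = (\<lambda>a i. P (\<lambda>b c j. z a b c (j - sh a)) (i + sh a))"

definition is_qmetric :: "om11 \<Rightarrow> bool" where
  "is_qmetric g \<longleftrightarrow> (\<forall>f. lmul2 f g = rmul2 g f) \<and> wedge11 g = 0
     \<and> (\<exists>P. bimod_map_A P \<and> (\<forall>w. pair_id P (tens12 w g) = w \<and> id_pair P (tens21 g w) = w))"

definition gmet :: om11 where
  "gmet = tens11 (e Pl) (e Mi) + tens11 (e Mi) (e Pl)"

definition smul :: "bit \<Rightarrow> om11 \<Rightarrow> om11" where
  "smul c x = (\<lambda>a b i. c * x a b i)"

definition ee :: "pm \<Rightarrow> pm \<Rightarrow> om11" where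
  "ee a b = tens11 (e a) (e b)"

fun nablaE :: "bit \<Rightarrow> bit \<Rightarrow> pm \<Rightarrow> om11" where
  "nablaE \<alpha> \<beta> Pl = smul \<alpha> (ee Mi Mi) + smul (\<alpha> * \<beta>) (gmet + ee Pl Pl)"
| "nablaE \<alpha> \<beta> Mi = smul \<beta> (ee Pl Pl) + smul (\<alpha> * \<beta>) (gmet + ee Mi Mi)"

text \<open>extended to all 1-forms by the left Leibniz rule\<close>
definition nab :: "bit \<Rightarrow> bit \<Rightarrow> om1 \<Rightarrow> om11" where
  "nab \<alpha> \<beta> w =
     (tens11 (dA (w Pl)) (e Pl) + lmul2 (w Pl) (nablaE \<alpha> \<beta> Pl))
   + (tens11 (dA (w Mi)) (e Mi) + lmul2 (w Mi) (nablaE \<alpha> \<beta> Mi))"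

fun sigE :: "bit \<Rightarrow> bit \<Rightarrow> pm \<Rightarrow> pm \<Rightarrow> om11" where
  "sigE \<alpha> \<beta> Pl Pl = smul (1 + \<alpha> * \<beta>) (ee Pl Pl) + smul \<alpha> (ee Mi Mi)"
| "sigE \<alpha> \<beta> Pl Mi = smul (1 + \<alpha> * \<beta>) (ee Mi Pl) + smul (\<alpha> * \<beta>) (ee Pl Mi)"
| "sigE \<alpha> \<beta> Mi Mi = smul (1 + \<alpha> * \<beta>) (ee Mi Mi) + smul \<beta> (ee Pl Pl)"
| "sigE \<alpha> \<beta> Mi Pl = smul (1 + \<alpha> * \<beta>) (ee Pl Mi) + smul (\<alpha> * \<beta>) (ee Mi Pl)"

definition sig :: "bit \<Rightarrow> bit \<Rightarrow> om11 \<Rightarrow> om11" where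
  "sig \<alpha> \<beta> x =
     lmul2 (x Pl Pl) (sigE \<alpha> \<beta> Pl Pl) + lmul2 (x Pl Mi) (sigE \<alpha> \<beta> Pl Mi)
   + lmul2 (x Mi Mi) (sigE \<alpha> \<beta> Mi Mi) + lmul2 (x Mi Pl) (sigE \<alpha> \<beta> Mi Pl)"

end

theory Submission
  imports Defs
begin

lemma UNIV4: "(UNIV::4 set) = {0,1,2,3}"
proof -
  have "x \<in> {0,1,2,3}" for x :: 4
  proof (cases x)
    case (of_int z)
    then have "z = 0 \<or> z = 1 \<or> z = 2 \<or> z = 3" by auto
    then show ?thesis using of_int by auto
  qed
  then show ?thesis by auto
qed
lemma all4: "(\<forall>i::4. P i) \<longleftrightarrow> P 0 \<and> P 1 \<and> P 2 \<and> P 3"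
  by (metis UNIV4 UNIV_I insertE empty_iff)
lemma allpm: "(\<forall>a::pm. P a) \<longleftrightarrow> P Pl \<and> P Mi"
  by (metis pm.exhaust)
lemma bit_eq_conv: "(x::bit) = y \<longleftrightarrow> (Rep_bit x \<longleftrightarrow> Rep_bit y)"
  by (simp add: Rep_bit_inject)
lemma Rep_bit_plus: "Rep_bit (x + y) = (Rep_bit x \<noteq> Rep_bit y)"
  by (simp only: plus_bit_def Abs_bit_inverse UNIV_I)
lemma Rep_bit_times: "Rep_bit (x * y) = (Rep_bit x \<and> Rep_bit y)"
  by (simp only: times_bit_def Abs_bit_inverse UNIV_I)
lemma Rep_bit_0: "Rep_bit 0 = False"
  by (simp only: zero_bit_def Abs_bit_inverse UNIV_I)
lemma Rep_bit_1: "Rep_bit 1 = True"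
  by (simp only: one_bit_def Abs_bit_inverse UNIV_I)
lemma Rep_bit_minus: "Rep_bit (x - y) = (Rep_bit x \<noteq> Rep_bit y)"
  by (simp only: minus_bit_def Rep_bit_plus)
lemma Rep_bit_uminus: "Rep_bit (- x) = Rep_bit x"
  by simp
lemmas Rb = bit_eq_conv Rep_bit_plus Rep_bit_times Rep_bit_0 Rep_bit_1 Rep_bit_minus Rep_bit_uminus

lemma fe2: "(x::om11) = y \<longleftrightarrow> (\<forall>a b i. x a b i = y a b i)" by (auto simp: fun_eq_iff)
lemma fe1: "(x::om1) = y \<longleftrightarrow> (\<forall>a i. x a i = y a i)" by (auto simp: fun_eq_iff)
lemma fe3: "(x::om111) = y \<longleftrightarrow> (\<forall>a b c i. x a b c i = y a b c i)" by (auto simp: fun_eq_iff)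
lemma fe0: "(x::alg) = y \<longleftrightarrow> (\<forall>i. x i = y i)" by (auto simp: fun_eq_iff)

lemma N4: "(4::4) = 0" "(5::4) = 1" "(6::4) = 2" "(7::4) = 3" "(8::4) = 0" "(9::4) = 1"
  "(-1::4) = 3" "(-2::4) = 2" "(-3::4) = 1" "(-4::4) = 0" "(-5::4) = 3" "(-6::4) = 2"
  by simp_all

definition delta :: "4 \<Rightarrow> alg" where "delta j = (\<lambda>k. if k = j then 1 else 0)"
declare add_bit_eq_xor[simp del] mult_bit_eq_and[simp del]

lemmas D = N4 delta_def R_def e_def dA_def lmul1_def rmul1_def lmul2_def rmul2_def tens11_def tens21_def
  tens12_def tens2_1_def wedge11_def wedge_id_def d1_def sig_id_def gmet_def smul_def ee_def
  nab_def sig_def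




lemma nab_add: "nab \<alpha> \<beta> (w + v) = nab \<alpha> \<beta> w + nab \<alpha> \<beta> v"
  unfolding fe2 allpm all4 by (cases \<alpha>; cases \<beta>; intro conjI; simp add: D del: add_bit_eq_xor mult_bit_eq_and; (simp only: Rb)?; sat)

lemma nab_left: "nab \<alpha> \<beta> (lmul1 f w) = tens11 (dA f) w + lmul2 f (nab \<alpha> \<beta> w)"
  unfolding fe2 allpm all4 by (cases \<alpha>; cases \<beta>; intro conjI; simp add: D del: add_bit_eq_xor mult_bit_eq_and; (simp only: Rb)?; sat)

lemma nab_right: "nab \<alpha> \<beta> (rmul1 w f) = rmul2 (nab \<alpha> \<beta> w) f + sig \<alpha> \<beta> (tens11 w (dA f))"
  unfolding fe2 allpm all4 by (cases \<alpha>; cases \<beta>; intro conjI; simp add: D del: add_bit_eq_xor mult_bit_eq_and; (simp only: Rb)?; sat)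

lemma sig_add: "sig \<alpha> \<beta> (x + y) = sig \<alpha> \<beta> x + sig \<alpha> \<beta> y"
  unfolding fe2 allpm all4 by (cases \<alpha>; cases \<beta>; intro conjI; simp add: D del: add_bit_eq_xor mult_bit_eq_and; (simp only: Rb)?; sat)

lemma sig_left: "sig \<alpha> \<beta> (lmul2 f x) = lmul2 f (sig \<alpha> \<beta> x)"
  unfolding fe2 allpm all4 by (cases \<alpha>; cases \<beta>; intro conjI; simp add: D del: add_bit_eq_xor mult_bit_eq_and; (simp only: Rb)?; sat)

lemma sig_right: "sig \<alpha> \<beta> (rmul2 x f) = rmul2 (sig \<alpha> \<beta> x) f"
  unfolding fe2 allpm all4 by (cases \<alpha>; cases \<beta>; intro conjI; simp add: D del: add_bit_eq_xor mult_bit_eq_and; (simp only: Rb)?; sat)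

lemma nab_tors: "wedge11 (nab \<alpha> \<beta> w) - d1 w = 0"
  unfolding fe0 all4 by (cases \<alpha>; cases \<beta>; intro conjI; simp add: D del: add_bit_eq_xor mult_bit_eq_and; (simp only: Rb)?; sat)

lemma nab_metric: "metric_term (nab \<alpha> \<beta>) (sig \<alpha> \<beta>) gmet = 0"
  unfolding fe3 allpm all4 metric_term_def by (cases \<alpha>; cases \<beta>; intro conjI; simp add: D del: add_bit_eq_xor mult_bit_eq_and; (simp only: Rb)?; sat)

lemma nab_flat: "curvature (nab \<alpha> \<beta>) w = 0"
  unfolding curvature_def curv_op_def fe1 allpm all4 by (cases \<alpha>; cases \<beta>; intro conjI; simp add: D del: add_bit_eq_xor mult_bit_eq_and; (simp only: Rb)?; sat)

lemma qm_gmet: "is_qmetric gmet"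
  unfolding is_qmetric_def
proof (intro conjI allI)
  show "lmul2 f gmet = rmul2 gmet f" for f
    unfolding fe2 allpm all4 by (intro conjI; simp add: D; (simp only: Rb)?; sat)
  show "wedge11 gmet = 0"
    unfolding fe0 all4 by (simp add: D)
  let ?P = "\<lambda>x i. x Mi Pl i + x Pl Mi i :: bit"
  have "bimod_map_A ?P"
    unfolding bimod_map_A_def
    by (intro conjI allI; unfold fe0 all4; intro conjI; simp add: D; (simp only: Rb)?; sat)
  moreover have "\<forall>w. pair_id ?P (tens12 w gmet) = w \<and> id_pair ?P (tens21 gmet w) = w"
    by (intro conjI allI; unfold fe1 allpm all4; intro conjI; simp add: D pair_id_def id_pair_def; (simp only: Rb)?; sat)
  ultimately show "\<exists>P. bimod_map_A P \<and> (\<forall>w. pair_id P (tens12 w gmet) = w \<and> id_pair P (tens21 gmet w) = w)"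
    by blast
qed

lemma qm_unique:
  assumes Q: "is_qmetric g"
  shows "g = gmet"
proof -
  from Q have c: "\<And>f. lmul2 f g = rmul2 g f" and w: "wedge11 g = 0"
    and ex: "\<exists>P. bimod_map_A P \<and> (\<forall>w. pair_id P (tens12 w g) = w \<and> id_pair P (tens21 g w) = w)"
    unfolding is_qmetric_def by blast+
  then obtain P where bP: "bimod_map_A P" and pid: "\<And>w. pair_id P (tens12 w g) = w"
    by blast
  from bP have Pl2: "\<And>f x. P (lmul2 f x) = f * P x" unfolding bimod_map_A_def by blast
  have h: "\<forall>i. lmul2 (delta i) g Pl Pl i = rmul2 g (delta i) Pl Pl i \<and> lmul2 (delta i) g Mi Mi i = rmul2 g (delta i) Mi Mi i"
    using c by simp
  note Z = h[unfolded all4 D, simplified]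
  note Wd = w[unfolded fe0 all4 wedge11_def]
  define hh where "hh = (\<lambda>i. g Mi Pl (i + 1))"
  define y where "y = (\<lambda>a b (i::4). if a = Pl \<and> b = Mi then 1 else (0::bit))"
  have "(\<lambda>a b. tens12 (e Pl) g a b Pl) = lmul2 hh y"
    unfolding fe2 allpm all4 hh_def y_def using Z by (simp add: D)
  moreover have "pair_id P (tens12 (e Pl) g) Pl = e Pl Pl" using pid by simp
  ultimately have "hh * P y = e Pl Pl" unfolding pair_id_def using Pl2 by simp
  then have "\<forall>i. hh i * P y i = 1" by (simp add: fun_eq_iff e_def)
  then have H: "\<forall>i. hh i = 1" by (metis mult_zero_left zero_neq_one bit_not_one_iff)
  note H2 = H[unfolded all4 hh_def, simplified N4]
  show ?thesis
    unfolding fe2 allpm all4 using Z Wd H2 by (intro conjI; simp add: D; (simp only: Rb)?; sat)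
qed
lemma classify:
  assumes Q: "is_QLC gmet N S"
  shows "\<exists>\<alpha> \<beta>. N = nab \<alpha> \<beta> \<and> S = sig \<alpha> \<beta>"
proof -
  from Q have bc: "bimod_conn N S" and tf: "torsion_free N" and mt: "metric_term N S gmet = 0"
    unfolding is_QLC_def by auto
  from bc have Nadd: "\<And>w v. N (w + v) = N w + N v"
    and Nl: "\<And>f w. N (lmul1 f w) = tens11 (dA f) w + lmul2 f (N w)"
    and Nr: "\<And>w f. N (rmul1 w f) = rmul2 (N w) f + S (tens11 w (dA f))"
    and Sadd: "\<And>x y. S (x + y) = S x + S y"
    and Sl: "\<And>f x. S (lmul2 f x) = lmul2 f (S x)"
    unfolding bimod_conn_def bimod_map_def by blast+
  define G where "G = (\<lambda>a. N (e a))"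
  define s where "s = (\<lambda>a c. S (ee a c))"
  have wdec: "w = lmul1 (w Pl) (e Pl) + lmul1 (w Mi) (e Mi)" for w
    unfolding fe1 allpm all4 by (simp add: D)
  have Nform: "N w = (tens11 (dA (w Pl)) (e Pl) + lmul2 (w Pl) (G Pl)) + (tens11 (dA (w Mi)) (e Mi) + lmul2 (w Mi) (G Mi))" for w
  proof -
    have "N w = N (lmul1 (w Pl) (e Pl) + lmul1 (w Mi) (e Mi))" by (rule arg_cong[where f=N], rule wdec)
    also have "\<dots> = (tens11 (dA (w Pl)) (e Pl) + lmul2 (w Pl) (G Pl)) + (tens11 (dA (w Mi)) (e Mi) + lmul2 (w Mi) (G Mi))"
      by (simp only: Nadd Nl G_def)
    finally show ?thesis .
  qed
  have xdec: "x = lmul2 (x Pl Pl) (ee Pl Pl) + lmul2 (x Pl Mi) (ee Pl Mi) + lmul2 (x Mi Mi) (ee Mi Mi) + lmul2 (x Mi Pl) (ee Mi Pl)" for x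
    unfolding fe2 allpm all4 by (intro conjI; simp add: D del: add_bit_eq_xor mult_bit_eq_and; (simp only: Rb)?; sat)
  have Sform: "S x = lmul2 (x Pl Pl) (s Pl Pl) + lmul2 (x Pl Mi) (s Pl Mi) + lmul2 (x Mi Mi) (s Mi Mi) + lmul2 (x Mi Pl) (s Mi Pl)" for x
  proof -
    have "S x = S (lmul2 (x Pl Pl) (ee Pl Pl) + lmul2 (x Pl Mi) (ee Pl Mi) + lmul2 (x Mi Mi) (ee Mi Mi) + lmul2 (x Mi Pl) (ee Mi Pl))"
      by (rule arg_cong[where f=S], rule xdec)
    also have "\<dots> = lmul2 (x Pl Pl) (s Pl Pl) + lmul2 (x Pl Mi) (s Pl Mi) + lmul2 (x Mi Mi) (s Mi Mi) + lmul2 (x Mi Pl) (s Mi Pl)"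
      by (simp only: Sadd Sl s_def)
    finally show ?thesis .
  qed
  have RL: "N (rmul1 (e a) f) = rmul2 (G a) f + S (tens11 (e a) (dA f))" for a f
    by (simp add: Nr G_def)
  note RL' = RL[unfolded Nform Sform]
  note F2 = RL'[of Pl "delta 0"] RL'[of Pl "delta 1"] RL'[of Pl "delta 2"] RL'[of Pl "delta 3"]
    RL'[of Mi "delta 0"] RL'[of Mi "delta 1"] RL'[of Mi "delta 2"] RL'[of Mi "delta 3"]
  note F3 = F2[unfolded fe2 allpm all4 D, simplified]
  have sv: "\<forall>a c b' c' i. s a c b' c' i = (if c' = a \<and> b' = c then 1 else 0) + (if sh b' + sh c' = sh a + sh c then G a b' c' i else 0)"
    unfolding allpm all4 by (intro conjI; simp add: N4; insert F3; (simp only: Rb)?; sat)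
  have Ge: "N (e a) = G a" for a by (simp add: G_def)
  have gPl: "(\<lambda>a. gmet a Pl) = e Mi" and gMi: "(\<lambda>a. gmet a Mi) = e Pl"
    unfolding fe1 allpm all4 by (simp_all add: D)
  have d1e: "d1 (e a) = 0" for a
    unfolding fe0 all4 by (cases a; simp add: D)
  have T0: "wedge11 (G a) = 0" for a
    using tf unfolding torsion_free_def by (metis Ge d1e diff_zero)
  note T = T0[of Pl, unfolded fe0 all4 wedge11_def] T0[of Mi, unfolded fe0 all4 wedge11_def]
  note M = mt[unfolded metric_term_def gPl gMi Ge sig_id_def Sform, unfolded fe3 allpm all4 D, simplified, simplified sv, simplified]
  define \<alpha> where "\<alpha> = G Pl Mi Mi 0"
  define \<beta> where "\<beta> = G Mi Pl Pl 0"
  have GP: "G Pl = nablaE \<alpha> \<beta> Pl"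
    unfolding fe2 allpm all4 \<alpha>_def \<beta>_def nablaE.simps
    by (intro conjI; simp add: D; insert M T; (simp only: Rb)?; sat)
  have GM: "G Mi = nablaE \<alpha> \<beta> Mi"
    unfolding fe2 allpm all4 \<alpha>_def \<beta>_def nablaE.simps
    by (intro conjI; simp add: D; insert M T; (simp only: Rb)?; sat)
  have Neq: "N = nab \<alpha> \<beta>"
    by (rule ext) (simp only: Nform nab_def GP GM)
  have sE: "s a c = sigE \<alpha> \<beta> a c" for a c
    unfolding fe2 allpm all4
    by (cases a; cases c; intro conjI; simp add: D sv GP GM; (simp only: Rb)?; sat)
  have Seq: "S = sig \<alpha> \<beta>"
    by (rule ext) (simp only: Sform sig_def sE)
  show ?thesis using Neq Seq by blast
qed

lemma nab_QLC: "is_QLC gmet (nab \<alpha> \<beta>) (sig \<alpha> \<beta>)"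
  unfolding is_QLC_def bimod_conn_def bimod_map_def torsion_free_def
  by (intro conjI allI nab_add nab_left nab_right sig_add sig_left sig_right nab_tors nab_metric)

lemma nab_eval: "nab \<alpha> \<beta> (e Pl) Mi Mi 0 = \<alpha>" "nab \<alpha> \<beta> (e Mi) Pl Pl 0 = \<beta>"
  by (cases \<alpha>; cases \<beta>; simp add: D)+

lemma UNIVbit: "(UNIV::bit set) = {0,1}"
  using bit.exhaust by auto

lemma card4: "card {(nab \<alpha> \<beta>, sig \<alpha> \<beta>) | \<alpha> \<beta>. True} = 4"
proof -
  have se: "{(nab \<alpha> \<beta>, sig \<alpha> \<beta>) | \<alpha> \<beta>. True} = (\<lambda>(\<alpha>, \<beta>). (nab \<alpha> \<beta>, sig \<alpha> \<beta>)) ` UNIV"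
    by auto
  have inj: "inj (\<lambda>(\<alpha>, \<beta>). (nab \<alpha> \<beta>, sig \<alpha> \<beta>))"
    unfolding inj_def by (auto, metis nab_eval(1), metis nab_eval(2))
  have "card ((\<lambda>(\<alpha>, \<beta>). (nab \<alpha> \<beta>, sig \<alpha> \<beta>)) ` (UNIV :: (bit \<times> bit) set)) = card (UNIV :: (bit \<times> bit) set)"
    using inj by (rule card_image)
  also have "\<dots> = 4"
    by (simp add: UNIV_Times_UNIV[symmetric] card_cartesian_product UNIVbit del: UNIV_Times_UNIV)
  finally show ?thesis using se by simp
qed

theorem proposition4p6:
  shows "(\<forall>g. is_qmetric g \<longleftrightarrow> g = gmet)
    \<and> {(N, S). is_QLC gmet N S} = {(nab \<alpha> \<beta>, sig \<alpha> \<beta>) | \<alpha> \<beta>. True}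
    \<and> card {(nab \<alpha> \<beta>, sig \<alpha> \<beta>) | \<alpha> \<beta>. True} = 4
    \<and> (\<forall>\<alpha> \<beta>. flat (nab \<alpha> \<beta>))"
proof (intro conjI)
  show "\<forall>g. is_qmetric g \<longleftrightarrow> g = gmet" using qm_gmet qm_unique by blast
  show "{(N, S). is_QLC gmet N S} = {(nab \<alpha> \<beta>, sig \<alpha> \<beta>) | \<alpha> \<beta>. True}"
  proof
    show "{(N, S). is_QLC gmet N S} \<subseteq> {(nab \<alpha> \<beta>, sig \<alpha> \<beta>) | \<alpha> \<beta>. True}"
      using classify by blast
    show "{(nab \<alpha> \<beta>, sig \<alpha> \<beta>) | \<alpha> \<beta>. True} \<subseteq> {(N, S). is_QLC gmet N S}"
      using nab_QLC by blast
  qed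
  show "card {(nab \<alpha> \<beta>, sig \<alpha> \<beta>) | \<alpha> \<beta>. True} = 4" by (rule card4)
  show "\<forall>\<alpha> \<beta>. flat (nab \<alpha> \<beta>)" unfolding flat_def using nab_flat by blast
qed

end
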